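(* Let $\alpha>1$ be fixed, and let $K$ and $J$ be bounded fundamental domains for the lattices $\alpha\mathbb{Z}$ and $\frac1\alpha\mathbb{Z}$ in $\mathbb{R}$, respectively. Then $B_\alpha:=\{\mathcal{Z}_{r,s,\alpha}: r\in J,\ s\in K\}$ is an algebraic basis (Hamel basis) of the complex vector space $V_\alpha:=\mathrm{span}_{\mathbb{C}}\{\mathcal{Z}_{r,s,\alpha}: r,s\in\mathbb{R}\}$ of all finite linear combinations of such measures.
   Context: For $r,s\in\mathbb{R}$ and $\alpha>0$, $\mathcal{Z}_{r,s,\alpha}:=\chi_r\cdot(\delta_s*\delta_{\alpha\mathbb{Z}})=\sum_{m\in\mathbb{Z}}e^{2\pi i r(s+m\alpha)}\delta_{s+m\alpha}$, where $\chi_r(x)=e^{2\pi i rx}$ and $\delta_x$ is the unit point mass at $x$. A fundamental domain for a lattice $L\subset\mathbb{R}$ is a set containing exactly one point of each coset $x+L$. *)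

theory Defs
  imports "HOL-Analysis.Analysis" "HOL-Library.Function_Algebras"
begin

text \<open>A discrete complex measure on the real line supported on a countable set is
  represented by its point-mass weight function (real \<Rightarrow> complex).
  The measure Z_{r,s,alpha} = sum over m of exp(2 pi i r (s + m alpha)) times the
  point mass at s + m alpha is thus the following function.\<close>
definition Zmeas :: "real \<Rightarrow> real \<Rightarrow> real \<Rightarrow> real \<Rightarrow> complex" where
  "Zmeas r s \<alpha> x =
     (if \<exists>m::int. x = s + of_int m * \<alpha>
      then exp (2 * pi * \<i> * complex_of_real (r * x)) else 0)"

definition cscale :: "complex \<Rightarrow> (real \<Rightarrow> complex) \<Rightarrow> (real \<Rightarrow> complex)" where
  "cscale c f = (\<lambda>x. c * f x)"

definition lattice :: "real \<Rightarrow> real set" where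
  "lattice \<beta> = {of_int m * \<beta> | m::int. True}"

definition fundamental_domain :: "real set \<Rightarrow> real set \<Rightarrow> bool" where
  "fundamental_domain L A \<longleftrightarrow> (\<forall>x. \<exists>!y. y \<in> A \<and> y \<in> (\<lambda>l. x + l) ` L)"

end

theory Submission
  imports Defs
begin

lemma module_cscale: "module cscale"
  by unfold_locales (auto simp: cscale_def fun_eq_iff algebra_simps)

lemma vander:
  fixes a g :: "'i \<Rightarrow> complex"
  assumes "finite T" "inj_on g T" "\<forall>m::nat. (\<Sum>i\<in>T. a i * g i ^ m) = 0"
  shows "\<forall>i\<in>T. a i = 0"
  using assms
proof (induction T arbitrary: a rule: finite_induct)
  case empty then show ?case by simp
next
  case (insert i0 T)
  define b where "b i = a i * (g i - g i0)" for i
  have "(\<Sum>i\<in>T. b i * g i ^ m) = 0" for m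
  proof -
    have "(\<Sum>i\<in>insert i0 T. b i * g i ^ m) = (\<Sum>i\<in>insert i0 T. a i * g i ^ Suc m) - g i0 * (\<Sum>i\<in>insert i0 T. a i * g i ^ m)"
      by (simp add: b_def sum_distrib_left sum_subtractf[symmetric] algebra_simps)
    also have "\<dots> = 0 - g i0 * 0" using insert.prems(2) by presburger
    also have "\<dots> = 0" by simp
    finally show ?thesis using insert.hyps by (simp add: b_def)
  qed
  moreover have "inj_on g T" using insert.prems(1) by (simp add: inj_on_insert)
  ultimately have hb: "\<forall>i\<in>T. b i = 0" using insert.IH by blast
  have "\<forall>i\<in>T. a i = 0"
  proof
    fix i assume "i \<in> T"
    then have "g i \<noteq> g i0" using insert.prems(1) insert.hyps by (auto simp: inj_on_def)
    then show "a i = 0" using hb \<open>i \<in> T\<close> unfolding b_def by (metis mult_eq_0_iff right_minus_eq)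
  qed
  moreover have "(\<Sum>i\<in>insert i0 T. a i * g i ^ 0) = 0" using insert.prems(2) by blast
  ultimately have "a i0 = 0" using insert.hyps by simp
  then show ?case using \<open>\<forall>i\<in>T. a i = 0\<close> by simp
qed

lemma sum_fun_app:
  fixes f :: "'i \<Rightarrow> real \<Rightarrow> complex"
  shows "finite T \<Longrightarrow> (\<Sum>v\<in>T. f v) x = (\<Sum>v\<in>T. f v x)"
  by (induction T rule: finite_induct) auto

lemma fd_unique:
  assumes "fundamental_domain (lattice \<beta>) A" "a \<in> A" "b \<in> A" "b = a + of_int k * \<beta>"
  shows "a = b"
proof -
  have "a \<in> (\<lambda>l. a + l) ` lattice \<beta>"
    by (rule image_eqI[of _ _ 0]) (auto simp: lattice_def intro: exI[of _ 0])
  moreover have "b \<in> (\<lambda>l. a + l) ` lattice \<beta>"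
    using assms(4) by (auto simp: lattice_def)
  ultimately show ?thesis using assms(1-3) unfolding fundamental_domain_def by blast
qed

lemma fd_exists:
  assumes "fundamental_domain (lattice \<beta>) A"
  obtains k :: int where "x + of_int k * \<beta> \<in> A"
  using assms unfolding fundamental_domain_def lattice_def by blast

lemma Zmeas_shift: "Zmeas r (s + of_int k * \<alpha>) \<alpha> = Zmeas r s \<alpha>"
proof -
  have "(\<exists>m::int. x = s + of_int k * \<alpha> + of_int m * \<alpha>) \<longleftrightarrow> (\<exists>m::int. x = s + of_int m * \<alpha>)" for x
  proof
    assume "\<exists>m::int. x = s + of_int k * \<alpha> + of_int m * \<alpha>"
    then obtain m :: int where "x = s + of_int k * \<alpha> + of_int m * \<alpha>" by blast
    then show "\<exists>m::int. x = s + of_int m * \<alpha>" by (intro exI[of _ "k + m"]) (simp add: algebra_simps)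
  next
    assume "\<exists>m::int. x = s + of_int m * \<alpha>"
    then obtain m :: int where "x = s + of_int m * \<alpha>" by blast
    then show "\<exists>m::int. x = s + of_int k * \<alpha> + of_int m * \<alpha>" by (intro exI[of _ "m - k"]) (simp add: algebra_simps)
  qed
  then show ?thesis unfolding Zmeas_def by (simp add: fun_eq_iff)
qed

lemma Zmeas_rshift:
  assumes "\<alpha> \<noteq> 0"
  shows "Zmeas (r + of_int k * (1/\<alpha>)) s \<alpha> = cscale (exp (2 * pi * \<i> * complex_of_real (of_int k * s / \<alpha>))) (Zmeas r s \<alpha>)"
proof (rule ext)
  fix x
  show "Zmeas (r + of_int k * (1/\<alpha>)) s \<alpha> x = cscale (exp (2 * pi * \<i> * complex_of_real (of_int k * s / \<alpha>))) (Zmeas r s \<alpha>) x"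
  proof (cases "\<exists>m::int. x = s + of_int m * \<alpha>")
    case True
    then obtain m :: int where m: "x = s + of_int m * \<alpha>" by blast
    have "2 * pi * \<i> * complex_of_real ((r + of_int k * (1/\<alpha>)) * x)
        = (2 * pi * \<i> * complex_of_real (r * x) + 2 * pi * \<i> * complex_of_real (of_int k * s / \<alpha>))
          + \<i> * (of_int (k*m) * (of_real pi * 2))"
      using assms by (simp add: m field_simps)
    then have "exp (2 * pi * \<i> * complex_of_real ((r + of_int k * (1/\<alpha>)) * x))
       = exp (2 * pi * \<i> * complex_of_real (r * x)) * exp (2 * pi * \<i> * complex_of_real (of_int k * s / \<alpha>))"
      by (metis exp_plus_2pin exp_add)
    then show ?thesis using True by (simp add: Zmeas_def cscale_def mult.commute)
  next
    case False
    then show ?thesis by (simp add: Zmeas_def cscale_def)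
  qed
qed

lemma Zval:
  assumes "fundamental_domain (lattice \<alpha>) K" "s \<in> K" "s0 \<in> K"
  shows "Zmeas r s \<alpha> (s0 + of_nat m * \<alpha>) =
    (if s = s0 then exp (2 * pi * \<i> * complex_of_real (r * s0)) * exp (2 * pi * \<i> * complex_of_real (r * \<alpha>)) ^ m else 0)"
proof (cases "s = s0")
  case True
  have "\<exists>m'::int. s0 + of_nat m * \<alpha> = s + of_int m' * \<alpha>"
    using True by (intro exI[of _ "int m"]) simp
  moreover have "2 * pi * \<i> * complex_of_real (r * (s0 + of_nat m * \<alpha>))
     = 2 * pi * \<i> * complex_of_real (r * s0) + of_nat m * (2 * pi * \<i> * complex_of_real (r * \<alpha>))"
    by (simp add: algebra_simps)
  ultimately show ?thesis using True by (simp add: Zmeas_def exp_add exp_of_nat_mult)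
next
  case False
  have "\<not> (\<exists>m'::int. s0 + of_nat m * \<alpha> = s + of_int m' * \<alpha>)"
  proof
    assume "\<exists>m'::int. s0 + of_nat m * \<alpha> = s + of_int m' * \<alpha>"
    then obtain m' :: int where "s0 + of_nat m * \<alpha> = s + of_int m' * \<alpha>" by blast
    then have "s = s0 + of_int (int m - m') * \<alpha>" by (simp add: algebra_simps)
    then have "s0 = s" using fd_unique[OF assms(1) assms(3) assms(2)] by blast
    then show False using False by simp
  qed
  then show ?thesis using False by (simp add: Zmeas_def)
qed


theorem proposition3p6:
  fixes \<alpha> :: real and K J :: "real set"
  assumes "\<alpha> > 1"
    and "bounded K" and "fundamental_domain (lattice \<alpha>) K"
    and "bounded J" and "fundamental_domain (lattice (1 / \<alpha>)) J"
  shows "\<not> module.dependent cscale {Zmeas r s \<alpha> | r s. r \<in> J \<and> s \<in> K}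
     \<and> module.span cscale {Zmeas r s \<alpha> | r s. r \<in> J \<and> s \<in> K}
        = module.span cscale {Zmeas r s \<alpha> | r s. True}"
proof
  interpret M: module cscale by (rule module_cscale)
  have a0: "\<alpha> \<noteq> 0" using assms(1) by simp
  let ?B = "{Zmeas r s \<alpha> | r s. r \<in> J \<and> s \<in> K}"
  show "M.span ?B = M.span {Zmeas r s \<alpha> | r s. True}"
  proof
    show "M.span ?B \<subseteq> M.span {Zmeas r s \<alpha> | r s. True}" by (rule M.span_mono) blast
  next
    have "Zmeas r s \<alpha> \<in> M.span ?B" for r s
    proof -
      obtain k :: int where k: "s + of_int k * \<alpha> \<in> K" using fd_exists[OF assms(3)] by blast
      obtain j :: int where j: "r + of_int j * (1/\<alpha>) \<in> J" using fd_exists[OF assms(5)] by blast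
      define s' where "s' = s + of_int k * \<alpha>"
      define r' where "r' = r + of_int j * (1/\<alpha>)"
      have "Zmeas r s \<alpha> = Zmeas r s' \<alpha>" unfolding s'_def by (simp add: Zmeas_shift)
      also have "\<dots> = Zmeas (r' + of_int (-j) * (1/\<alpha>)) s' \<alpha>" unfolding r'_def by simp
      also have "Zmeas (r' + of_int (-j) * (1/\<alpha>)) s' \<alpha> = cscale (exp (2 * pi * \<i> * complex_of_real (of_int (-j) * s' / \<alpha>))) (Zmeas r' s' \<alpha>)"
        by (rule Zmeas_rshift[OF a0])
      finally have e: "Zmeas r s \<alpha> = cscale (exp (2 * pi * \<i> * complex_of_real (of_int (-j) * s' / \<alpha>))) (Zmeas r' s' \<alpha>)" .
      have "Zmeas r' s' \<alpha> \<in> ?B" using k j unfolding r'_def s'_def by blast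
      then show ?thesis unfolding e by (intro M.span_scale M.span_base)
    qed
    then show "M.span {Zmeas r s \<alpha> | r s. True} \<subseteq> M.span ?B"
      by (intro M.span_minimal M.subspace_span) blast
  qed
  show "\<not> M.dependent ?B"
  proof
    assume "M.dependent ?B"
    then obtain t u v0 where t: "finite t" "t \<subseteq> ?B" and sum0: "(\<Sum>v\<in>t. cscale (u v) v) = 0"
      and v0: "v0 \<in> t" "u v0 \<noteq> 0"
      unfolding M.dependent_explicit by blast
    have "\<forall>v\<in>t. \<exists>p. v = Zmeas (fst p) (snd p) \<alpha> \<and> fst p \<in> J \<and> snd p \<in> K"
      using t(2) by fastforce
    then obtain P where P: "\<And>v. v \<in> t \<Longrightarrow> v = Zmeas (fst (P v)) (snd (P v)) \<alpha> \<and> fst (P v) \<in> J \<and> snd (P v) \<in> K"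
      by metis
    define R where "R v = fst (P v)" for v
    define S where "S v = snd (P v)" for v
    have RS: "v = Zmeas (R v) (S v) \<alpha>" "R v \<in> J" "S v \<in> K" if "v \<in> t" for v
      using P[OF that] unfolding R_def S_def by auto
    define s0 where "s0 = S v0"
    define t' where "t' = {v\<in>t. S v = s0}"
    define a where "a v = u v * exp (2 * pi * \<i> * complex_of_real (R v * s0))" for v
    define g where "g v = exp (2 * pi * \<i> * complex_of_real (R v * \<alpha>))" for v
    have "(\<Sum>v\<in>t'. a v * g v ^ m) = 0" for m
    proof -
      have "0 = (\<Sum>v\<in>t. cscale (u v) v) (s0 + of_nat m * \<alpha>)" using sum0 by simp
      also have "\<dots> = (\<Sum>v\<in>t. u v * v (s0 + of_nat m * \<alpha>))"
        using t(1) by (simp add: sum_fun_app cscale_def)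
      also have "\<dots> = (\<Sum>v\<in>t. if S v = s0 then a v * g v ^ m else 0)"
      proof (rule sum.cong[OF refl])
        fix v assume "v \<in> t"
        have "v (s0 + of_nat m * \<alpha>) = Zmeas (R v) (S v) \<alpha> (s0 + of_nat m * \<alpha>)"
          using RS(1)[OF \<open>v \<in> t\<close>] by simp
        also have "\<dots> = (if S v = s0 then exp (2 * pi * \<i> * complex_of_real (R v * s0)) * g v ^ m else 0)"
          unfolding g_def by (rule Zval[OF assms(3) RS(3)[OF \<open>v \<in> t\<close>]]) (use v0 RS s0_def in auto)
        finally show "u v * v (s0 + of_nat m * \<alpha>) = (if S v = s0 then a v * g v ^ m else 0)"
          by (simp add: a_def)
      qed
      also have "\<dots> = (\<Sum>v\<in>t'. a v * g v ^ m)"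
        unfolding t'_def using t(1) by (simp add: sum.inter_filter)
      finally show ?thesis by simp
    qed
    moreover have "inj_on g t'"
    proof (rule inj_onI)
      fix v w assume vw: "v \<in> t'" "w \<in> t'" "g v = g w"
      then obtain n :: int where n: "2 * pi * \<i> * complex_of_real (R v * \<alpha>) = 2 * pi * \<i> * complex_of_real (R w * \<alpha>) + (of_int (2 * n) * pi) * \<i>"
        unfolding g_def exp_eq by blast
      then have "Im (2 * pi * \<i> * complex_of_real (R v * \<alpha>)) = Im (2 * pi * \<i> * complex_of_real (R w * \<alpha>) + (of_int (2 * n) * pi) * \<i>)"
        by simp
      then have "2 * pi * (R v * \<alpha>) = 2 * pi * (R w * \<alpha>) + 2 * of_int n * pi" by simp
      then have "(2 * pi) * (R v * \<alpha>) = (2 * pi) * (R w * \<alpha> + of_int n)" by (simp add: algebra_simps)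
      then have "R v * \<alpha> = R w * \<alpha> + of_int n" using pi_gt_zero by (simp only: mult_left_cancel)
      then have "R v = R w + of_int n * (1/\<alpha>)" using a0 by (simp add: field_simps)
      then have "R w = R v" using fd_unique[OF assms(5)] RS vw(1,2) unfolding t'_def by blast
      moreover have "S w = S v" using vw unfolding t'_def by simp
      ultimately show "v = w" using RS(1) vw(1,2) unfolding t'_def by (metis (mono_tags, lifting) mem_Collect_eq)
    qed
    moreover have "finite t'" using t(1) unfolding t'_def by simp
    ultimately have "\<forall>v\<in>t'. a v = 0" using vander by blast
    moreover have "v0 \<in> t'" using v0 unfolding t'_def s0_def by simp
    ultimately have "a v0 = 0" by blast
    then show False using v0(2) by (simp add: a_def)
  qed
qed
end
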